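(* Let $A\in\mathbb{R}^{m\times n}$ be semimonotone ($A^{\dagger}\geq 0$) and let $(U_k,V_k,E_k)_{k=1}^{p}$ be a proper weak regular multisplitting of $A$ such that $R(E_k)\subseteq R(A^{T})$ for each $k=1,\ldots,p$. Let $H=\sum_{k=1}^{p}E_kU_k^{\dagger}V_k$. Then $I-H$ is invertible, and with $B=A(I-H)^{-1}$ and $C=B-A$, the splitting $A=B-C$ is the unique proper splitting of $A$ induced by $H$ (i.e. with $B^{\dagger}C=H$), and it is a convergent proper weak regular splitting.
   Context: $A^{\dagger}$ denotes the Moore–Penrose inverse, $\rho(\cdot)$ the spectral radius, $R(\cdot)$ and $N(\cdot)$ range and null space; inequalities are entrywise. A splitting $A=U-V$ is proper if $R(U)=R(A)$ and $N(U)=N(A)$; it is convergent if $\rho(U^{\dagger}V)<1$; a proper splitting is proper weak regular if $U^{\dagger}\geq 0$ and $U^{\dagger}V\geq 0$. A triplet $(U_k,V_k,E_k)_{k=1}^{p}$ is a proper multisplitting of $A\in\mathbb{R}^{m\times n}$ if each $A=U_k-V_k$ is a proper splitting and each $E_k\geq 0$ is an $n\times n$ diagonal matrix with $\sum_{k=1}^{p}E_k=I_n$; it is a proper weak regular multisplitting if each $A=U_k-V_k$ is a proper weak regular splitting. A splitting $A=B-C$ is said to be induced by $H$ if $B^{\dagger}C=H$. *)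

theory Defs
  imports "HOL-Analysis.Analysis"
begin

text \<open>Matrices are real^'n^'m (m rows, n columns). Moore--Penrose inverse via the four Penrose equations.\<close>

definition moore_penrose :: "real^'n^'m \<Rightarrow> real^'m^'n" where
  "moore_penrose A = (THE X. A ** X ** A = A \<and> X ** A ** X = X \<and>
      transpose (A ** X) = A ** X \<and> transpose (X ** A) = X ** A)"

definition mat_range :: "real^'n^'m \<Rightarrow> (real^'m) set" where
  "mat_range A = range (\<lambda>x. A *v x)"

definition mat_null :: "real^'n^'m \<Rightarrow> (real^'n) set" where
  "mat_null A = {x. A *v x = 0}"

definition nonneg_mat :: "real^'n^'m \<Rightarrow> bool" where
  "nonneg_mat A \<longleftrightarrow> (\<forall>i j. 0 \<le> A $ i $ j)"

definition diagonal_mat :: "real^'n^'n \<Rightarrow> bool" where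
  "diagonal_mat E \<longleftrightarrow> (\<forall>i j. i \<noteq> j \<longrightarrow> E $ i $ j = 0)"

definition spectral_radius :: "real^'n^'n \<Rightarrow> real" where
  "spectral_radius M = Sup {cmod z | z. \<exists>v :: complex^'n. v \<noteq> 0 \<and>
       (\<chi> i j. complex_of_real (M $ i $ j)) *v v = z *s v}"

definition proper_splitting :: "real^'n^'m \<Rightarrow> real^'n^'m \<Rightarrow> real^'n^'m \<Rightarrow> bool" where
  "proper_splitting A U V \<longleftrightarrow> A = U - V \<and> mat_range U = mat_range A \<and> mat_null U = mat_null A"

definition convergent_splitting :: "real^'n^'m \<Rightarrow> real^'n^'m \<Rightarrow> bool" where
  "convergent_splitting U V \<longleftrightarrow> spectral_radius (moore_penrose U ** V) < 1"

definition proper_weak_regular_splitting :: "real^'n^'m \<Rightarrow> real^'n^'m \<Rightarrow> real^'n^'m \<Rightarrow> bool" where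
  "proper_weak_regular_splitting A U V \<longleftrightarrow> proper_splitting A U V \<and>
     nonneg_mat (moore_penrose U) \<and> nonneg_mat (moore_penrose U ** V)"

definition proper_weak_regular_multisplitting ::
  "real^'n^'m \<Rightarrow> nat \<Rightarrow> (nat \<Rightarrow> real^'n^'m) \<Rightarrow> (nat \<Rightarrow> real^'n^'m) \<Rightarrow> (nat \<Rightarrow> real^'n^'n) \<Rightarrow> bool" where
  "proper_weak_regular_multisplitting A p U V E \<longleftrightarrow>
     (\<forall>k\<in>{1..p}. proper_weak_regular_splitting A (U k) (V k) \<and> nonneg_mat (E k) \<and> diagonal_mat (E k)) \<and>
     (\<Sum>k=1..p. E k) = mat 1"

end

theory Submission imports Defs "HOL-Computational_Algebra.Fundamental_Theorem_Algebra" begin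


lemma minv: assumes "invertible (A::'a::semiring_1^'n^'m)"
  shows "A ** matrix_inv A = mat 1" "matrix_inv A ** A = mat 1"
  using someI_ex[OF assms[unfolded invertible_def]] unfolding matrix_inv_def by auto

lemma madd_rdistrib: "((B::'a::comm_ring_1^'c^'b) + C) ** A = B ** A + C ** A"
  by (simp add: matrix_matrix_mult_def vec_eq_iff sum.distrib algebra_simps)

lemma linv_eq: "(B::'a::semiring_1^'n^'n) ** A = mat 1 \<Longrightarrow> A ** C = mat 1 \<Longrightarrow> B = C"
  by (metis matrix_mul_assoc matrix_mul_lid matrix_mul_rid)

lemma sum_mmul_right: "(\<Sum>k\<in>S. F k) ** (M::'a::comm_ring_1^'c^'b) = (\<Sum>k\<in>S. F k ** M)"
  by (induct S rule: infinite_finite_induct) (simp_all add: madd_rdistrib)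

lemma sum_mmul_left: "(M::'a::comm_ring_1^'c^'b) ** (\<Sum>k\<in>S. F k) = (\<Sum>k\<in>S. M ** F k)"
  by (induct S rule: infinite_finite_induct) (simp_all add: matrix_add_ldistrib)

lemma sum_mvec: "(\<Sum>k\<in>S. F k) *v (x::'a::comm_ring_1^'c) = (\<Sum>k\<in>S. F k *v x)"
  by (induct S rule: infinite_finite_induct) (simp_all add: matrix_vector_mult_add_rdistrib)

lemma mmul_diff_left: "(A::'a::comm_ring_1^'c^'b) ** (B - C) = A ** B - A ** C"
  by (simp add: matrix_matrix_mult_def vec_eq_iff sum_subtractf algebra_simps)

lemma mmul_diff_right: "((B::'a::comm_ring_1^'c^'b) - C) ** A = B ** A - C ** A"
  by (simp add: matrix_matrix_mult_def vec_eq_iff sum_subtractf algebra_simps)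

lemma inj_gram:
  fixes X :: "real^'n^'m"
  assumes inj: "\<And>v. X *v v = 0 \<Longrightarrow> v = 0"
  shows "invertible (transpose X ** X)"
proof -
  have "\<And>v. (transpose X ** X) *v v = 0 \<Longrightarrow> v = 0"
  proof -
    fix v assume "(transpose X ** X) *v v = 0"
    then have "v \<bullet> (transpose X *v (X *v v)) = 0" by (simp add: matrix_vector_mul_assoc)
    then have "(X *v v) \<bullet> (X *v v) = 0"
      by (metis dot_lmul_matrix transpose_matrix_vector transpose_transpose vector_transpose_matrix inner_commute)
    then show "v = 0" using inj by simp
  qed
  then show ?thesis
    using matrix_left_invertible_ker invertible_left_inverse by blast
qed

lemma mp_inj:
  fixes X :: "real^'n^'m"
  assumes inj: "\<And>v. X *v v = 0 \<Longrightarrow> v = 0"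
  shows "moore_penrose X = matrix_inv (transpose X ** X) ** transpose X"
proof -
  let ?K = "transpose X ** X"
  let ?Y = "matrix_inv ?K ** transpose X"
  have iK: "invertible ?K" using inj_gram[OF inj] .
  have l: "matrix_inv ?K ** ?K = mat 1" and r: "?K ** matrix_inv ?K = mat 1"
    using minv[OF iK] by blast+
  have tK: "transpose (matrix_inv ?K) = matrix_inv ?K"
  proof -
    have "transpose (matrix_inv ?K) ** ?K = mat 1"
      using r by (metis matrix_transpose_mul transpose_mat transpose_transpose)
    then show ?thesis using r linv_eq by blast
  qed
  have YX: "?Y ** X = mat 1" using l by (simp add: matrix_mul_assoc)
  have P: "X ** ?Y ** X = X \<and> ?Y ** X ** ?Y = ?Y \<and>
      transpose (X ** ?Y) = X ** ?Y \<and> transpose (?Y ** X) = ?Y ** X"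
    using YX tK by (simp add: matrix_mul_assoc[symmetric] matrix_transpose_mul)
  show ?thesis unfolding moore_penrose_def
  proof (rule the_equality)
    show "X ** ?Y ** X = X \<and> ?Y ** X ** ?Y = ?Y \<and>
      transpose (X ** ?Y) = X ** ?Y \<and> transpose (?Y ** X) = ?Y ** X" by (rule P)
  next
    fix Z assume Z: "X ** Z ** X = X \<and> Z ** X ** Z = Z \<and>
      transpose (X ** Z) = X ** Z \<and> transpose (Z ** X) = Z ** X"
    have "?K ** Z = transpose X ** (X ** Z)" by (simp add: matrix_mul_assoc)
    also have "\<dots> = transpose X ** transpose (X ** Z)" using Z by simp
    also have "\<dots> = transpose (X ** Z ** X)" by (simp add: matrix_transpose_mul matrix_mul_assoc)
    also have "\<dots> = transpose X" using Z by simp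
    finally have KZ: "?K ** Z = transpose X" .
    have "Z = matrix_inv ?K ** ?K ** Z" using l by simp
    also have "\<dots> = ?Y" using KZ by (simp add: matrix_mul_assoc[symmetric])
    finally show "Z = ?Y" .
  qed
qed

lemma mp_props:
  fixes X :: "real^'n^'m"
  assumes inj: "\<And>v. X *v v = 0 \<Longrightarrow> v = 0"
  shows "moore_penrose X ** X = mat 1" "transpose (X ** moore_penrose X) = X ** moore_penrose X"
    "X ** moore_penrose X ** X = X" "moore_penrose X ** X ** moore_penrose X = moore_penrose X"
    "X ** moore_penrose X ** (X ** moore_penrose X) = X ** moore_penrose X"
proof -
  let ?K = "transpose X ** X"
  have iK: "invertible ?K" using inj_gram[OF inj] .
  have l: "matrix_inv ?K ** ?K = mat 1" and r: "?K ** matrix_inv ?K = mat 1"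
    using minv[OF iK] by blast+
  have tK: "transpose (matrix_inv ?K) = matrix_inv ?K"
  proof -
    have "transpose (matrix_inv ?K) ** ?K = mat 1"
      using r by (metis matrix_transpose_mul transpose_mat transpose_transpose)
    then show ?thesis using r linv_eq by blast
  qed
  have mpX: "moore_penrose X = matrix_inv ?K ** transpose X" by (rule mp_inj[OF inj])
  show 1: "moore_penrose X ** X = mat 1" using l by (simp add: mpX matrix_mul_assoc)
  show "transpose (X ** moore_penrose X) = X ** moore_penrose X"
    using tK by (simp add: mpX matrix_mul_assoc[symmetric] matrix_transpose_mul)
  show "X ** moore_penrose X ** X = X" using 1 by (simp add: matrix_mul_assoc[symmetric])
  show "moore_penrose X ** X ** moore_penrose X = moore_penrose X" using 1 by simp
  show "X ** moore_penrose X ** (X ** moore_penrose X) = X ** moore_penrose X"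
    using 1 by (metis matrix_mul_assoc matrix_mul_lid)
qed



lemma mat_scal_vec: "(mat z :: 'a::comm_ring_1^'n^'n) *v x = z *s x"
  by (simp add: vec_eq_iff mat_def matrix_vector_mult_def if_distrib if_distribR sum.delta cong: if_cong)

lemma eig_exists:
  fixes M :: "complex^'n^'n"
  shows "\<exists>z v. v \<noteq> 0 \<and> M *v v = z *s v"
proof -
  define P :: "complex poly^'n^'n" where "P = (\<chi> i j. [:- M$i$j, of_bool (i=j):])"
  have e: "poly (P$i$j) z = (mat z - M)$i$j" for i j z
    by (simp add: P_def mat_def)
  have ev: "poly (det P) z = det (mat z - M)" for z
    by (simp add: det_def poly_sum poly_prod e)
  let ?S = "{p. p permutes (UNIV::'n set)}"
  let ?t = "\<lambda>p. of_int (sign p) * (\<Prod>i\<in>UNIV. P$i$p i)"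
  have fin: "finite ?S" by (simp add: finite_permutations)
  have idS: "id \<in> ?S" by (simp add: permutes_id)
  have c_id: "coeff (?t id) CARD('n) = 1"
  proof -
    have nz: "\<forall>i\<in>UNIV. P$i$id i \<noteq> 0" by (simp add: P_def)
    have dg: "degree (\<Prod>i\<in>UNIV. P$i$id i) = CARD('n)"
      using degree_prod_eq_sum_degree[OF nz] by (simp add: P_def)
    have lc: "lead_coeff (\<Prod>i\<in>UNIV. P$i$id i) = 1"
      by (simp add: lead_coeff_prod P_def)
    show ?thesis using dg lc by (simp add: sign_id)
  qed
  have c_other: "coeff (?t p) CARD('n) = 0" if "p \<in> ?S - {id}" for p
  proof -
    from that have "p \<noteq> id" by auto
    then obtain i0 where i0: "p i0 \<noteq> i0" by (auto simp: fun_eq_iff)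
    have "degree (\<Prod>i\<in>UNIV. P$i$p i) \<le> (\<Sum>i\<in>UNIV. degree (P$i$p i))"
      using degree_prod_sum_le[of UNIV "\<lambda>i. P$i$p i"] by (simp add: o_def)
    also have "\<dots> = (\<Sum>i\<in>UNIV - {i0}. degree (P$i$p i))"
      using i0 by (simp add: sum.remove[of UNIV i0] P_def)
    also have "\<dots> \<le> (\<Sum>i\<in>UNIV - {i0}. 1)"
      by (rule sum_mono) (simp add: P_def)
    also have "\<dots> < CARD('n)" by (simp add: card_Diff_singleton)
    finally have d: "degree (\<Prod>i\<in>UNIV. P$i$p i) < CARD('n)" .
    have "degree (?t p) \<le> degree (\<Prod>i\<in>UNIV. P$i$p i)"
      using degree_mult_le[of "of_int (sign p)" "\<Prod>i\<in>UNIV. P$i$p i"] by simp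
    then show ?thesis using d by (intro coeff_eq_0) simp
  qed
  have "coeff (det P) CARD('n) = (\<Sum>p\<in>?S. coeff (?t p) CARD('n))"
    unfolding det_def by (rule coeff_sum)
  also have "\<dots> = coeff (?t id) CARD('n) + (\<Sum>p\<in>?S - {id}. coeff (?t p) CARD('n))"
    by (rule sum.remove[OF fin idS])
  also have "\<dots> = 1" using c_id c_other by (simp add: sum.neutral)
  finally have "coeff (det P) CARD('n) \<noteq> 0" by simp
  then have "CARD('n) \<le> degree (det P)" by (rule le_degree)
  moreover have "0 < CARD('n)" by (simp add: card_gt_0_iff)
  ultimately have "degree (det P) \<noteq> 0" by linarith
  then have "\<not> constant (poly (det P))" by (simp add: constant_degree)
  then obtain z where "poly (det P) z = 0" using fundamental_theorem_of_algebra by blast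
  then have "det (mat z - M) = 0" by (simp add: ev)
  then have "\<not> (\<exists>B. B ** (mat z - M) = mat 1)"
    using invertible_det_nz invertible_left_inverse by blast
  then obtain v where "(mat z - M) *v v = 0" "v \<noteq> 0"
    using matrix_left_invertible_ker by blast
  then have "M *v v = z *s v" "v \<noteq> 0" by (simp_all add: matrix_vector_mult_diff_rdistrib mat_scal_vec)
  then show ?thesis by blast
qed



lemma weighted_bound:
  fixes H :: "real^'n^'n" and w :: "real^'n"
  assumes Hnn: "nonneg_mat H" and wpos: "\<And>i. 0 < w$i" and lt: "\<And>i. (H *v w)$i < w$i"
  shows "\<exists>c<1. \<forall>z v. v \<noteq> 0 \<and> (\<chi> i j. complex_of_real (H$i$j)) *v v = z *s v \<longrightarrow> cmod z \<le> c"
proof -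
  define c where "c = Max (range (\<lambda>i. (H *v w)$i / w$i))"
  have c1: "c < 1" unfolding c_def
    using lt wpos by (simp add: Max_less_iff divide_less_eq)
  have cge: "(H *v w)$i \<le> c * w$i" for i
  proof -
    have "(H *v w)$i / w$i \<le> c" unfolding c_def by (rule Max_ge) auto
    then show ?thesis using wpos[of i] by (simp add: pos_divide_le_eq)
  qed
  have "cmod z \<le> c" if v0: "v \<noteq> 0" and ev: "(\<chi> i j. complex_of_real (H$i$j)) *v v = z *s v" for z v
  proof -
    define t where "t = Max (range (\<lambda>j. cmod (v$j) / w$j))"
    have "t \<in> range (\<lambda>j. cmod (v$j) / w$j)"
      unfolding t_def by (rule Max_in) auto
    then obtain i0 where i0: "t = cmod (v$i0) / w$i0" by auto
    have vle: "cmod (v$j) \<le> t * w$j" for j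
    proof -
      have "cmod (v$j) / w$j \<le> t" unfolding t_def by (rule Max_ge) auto
      then show ?thesis using wpos[of j] by (simp add: pos_divide_le_eq)
    qed
    obtain j where "v$j \<noteq> 0" using v0 by (auto simp: vec_eq_iff)
    then have "0 < cmod (v$j) / w$j" using wpos[of j] by simp
    also have "\<dots> \<le> t" unfolding t_def by (rule Max_ge) auto
    finally have tpos: "0 < t" .
    have vi0: "cmod (v$i0) = t * w$i0" using i0 wpos[of i0] by simp
    have "cmod z * cmod (v$i0) = cmod (((\<chi> i j. complex_of_real (H$i$j)) *v v)$i0)"
      using ev by (simp add: norm_mult)
    also have "\<dots> = cmod (\<Sum>j\<in>UNIV. complex_of_real (H$i0$j) * v$j)"
      by (simp add: matrix_vector_mult_def)
    also have "\<dots> \<le> (\<Sum>j\<in>UNIV. cmod (complex_of_real (H$i0$j) * v$j))"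
      by (rule norm_sum)
    also have "\<dots> = (\<Sum>j\<in>UNIV. H$i0$j * cmod (v$j))"
      using Hnn by (simp add: norm_mult nonneg_mat_def)
    also have "\<dots> \<le> (\<Sum>j\<in>UNIV. H$i0$j * (t * w$j))"
      using Hnn vle by (intro sum_mono mult_left_mono) (auto simp: nonneg_mat_def)
    also have "\<dots> = t * (H *v w)$i0"
      by (simp add: matrix_vector_mult_def sum_distrib_left algebra_simps)
    also have "\<dots> \<le> t * (c * w$i0)" using cge[of i0] tpos by simp
    finally have "cmod z * (t * w$i0) \<le> c * (t * w$i0)" using vi0 by (simp add: algebra_simps)
    moreover have "0 < t * w$i0" using tpos wpos[of i0] by simp
    ultimately show ?thesis using mult_right_le_imp_le by blast
  qed
  then show ?thesis using c1 by blast
qed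

lemma complex_embed:
  fixes H :: "real^'n^'n" and x :: "real^'n"
  shows "(\<chi> i j. complex_of_real (H$i$j)) *v (\<chi> i. complex_of_real (x$i)) = (\<chi> i. complex_of_real ((H *v x)$i))"
  by (simp add: vec_eq_iff matrix_vector_mult_def)



lemma sym_idem_eq:
  fixes S T :: "real^'m^'m"
  assumes SS: "S ** S = S" and TT: "T ** T = T" and tS: "transpose S = S" and tT: "transpose T = T"
    and rg: "mat_range S = mat_range T"
  shows "S = T"
proof -
  have TS: "T ** S = S"
  proof (rule matrix_eq[THEN iffD2], intro allI)
    fix x
    have "S *v x \<in> mat_range T" using rg by (auto simp: mat_range_def)
    then obtain y where y: "S *v x = T *v y" by (auto simp: mat_range_def)
    have "(T ** S) *v x = T *v (T *v y)" by (simp add: y matrix_vector_mul_assoc[symmetric])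
    also have "\<dots> = T *v y" by (simp add: matrix_vector_mul_assoc TT)
    finally show "(T ** S) *v x = S *v x" using y by simp
  qed
  have ST: "S ** T = T"
  proof (rule matrix_eq[THEN iffD2], intro allI)
    fix x
    have "T *v x \<in> mat_range S" using rg by (auto simp: mat_range_def)
    then obtain y where y: "T *v x = S *v y" by (auto simp: mat_range_def)
    have "(S ** T) *v x = S *v (S *v y)" by (simp add: y matrix_vector_mul_assoc[symmetric])
    also have "\<dots> = S *v y" by (simp add: matrix_vector_mul_assoc SS)
    finally show "(S ** T) *v x = T *v x" using y by simp
  qed
  have "S = transpose (T ** S)" using TS tS by simp
  also have "\<dots> = S ** T" by (simp add: matrix_transpose_mul tS tT)
  also have "\<dots> = T" by (rule ST)
  finally show ?thesis .
qed

lemma range_XXp: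
  fixes X :: "real^'n^'m"
  assumes inj: "\<And>v. X *v v = 0 \<Longrightarrow> v = 0"
  shows "mat_range (X ** moore_penrose X) = mat_range X"
proof -
  have "X ** moore_penrose X ** X = X" by (rule mp_props(3)[OF inj])
  then have "X *v x = (X ** moore_penrose X) *v (X *v x)" for x
    by (metis matrix_vector_mul_assoc)
  then show ?thesis unfolding mat_range_def
    by (auto simp: matrix_vector_mul_assoc[symmetric])
qed

lemma proj_eq:
  fixes X Y :: "real^'n^'m"
  assumes injX: "\<And>v. X *v v = 0 \<Longrightarrow> v = 0" and injY: "\<And>v. Y *v v = 0 \<Longrightarrow> v = 0"
    and rg: "mat_range X = mat_range Y"
  shows "X ** moore_penrose X = Y ** moore_penrose Y"
  by (rule sym_idem_eq) (simp_all add: mp_props[OF injX] mp_props[OF injY] range_XXp[OF injX] range_XXp[OF injY] rg)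

lemma rows_pos:
  fixes Y :: "real^'m^'n" and X :: "real^'n^'m"
  assumes nn: "nonneg_mat Y" and YX: "Y ** X = mat 1"
  shows "0 < (Y *v (\<chi> i. 1))$i"
proof -
  have "(\<Sum>j\<in>UNIV. Y$i$j * X$j$i) = 1"
    using YX by (simp add: vec_eq_iff matrix_matrix_mult_def mat_def)
  then obtain j where "Y$i$j \<noteq> 0" by (metis (mono_tags, lifting) mult_zero_left sum.neutral zero_neq_one)
  then have "0 < Y$i$j" using nn by (simp add: nonneg_mat_def order_less_le)
  then show ?thesis using nn
    by (simp add: matrix_vector_mult_def) (rule sum_pos2[of UNIV j], auto simp: nonneg_mat_def)
qed

lemma nonneg_mul: "nonneg_mat A \<Longrightarrow> nonneg_mat B \<Longrightarrow> nonneg_mat (A ** B)"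
  by (simp add: nonneg_mat_def matrix_matrix_mult_def sum_nonneg)

lemma nonneg_sum: "(\<And>k. k \<in> S \<Longrightarrow> nonneg_mat (F k)) \<Longrightarrow> nonneg_mat (\<Sum>k\<in>S. F k)"
  by (simp add: nonneg_mat_def sum_component sum_nonneg)

lemma diag_apply: "diagonal_mat E \<Longrightarrow> (E *v u)$i = E$i$i * u$i"
proof -
  assume d: "diagonal_mat E"
  have "(E *v u)$i = (\<Sum>j\<in>UNIV. E$i$j * u$j)" by (simp add: matrix_vector_mult_def)
  also have "\<dots> = E$i$i * u$i"
    by (subst sum.remove[of UNIV i]) (auto intro!: sum.neutral simp: d[unfolded diagonal_mat_def])
  finally show ?thesis .
qed

lemma null_inj: "(\<And>v. X *v v = 0 \<Longrightarrow> v = 0) \<Longrightarrow> mat_null X = {0}"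
  by (auto simp: mat_null_def)



theorem theorem5p5:
  fixes A :: "real^'n^'m" and p :: nat
    and U V :: "nat \<Rightarrow> real^'n^'m" and E :: "nat \<Rightarrow> real^'n^'n"
  assumes semimono: "nonneg_mat (moore_penrose A)"
    and msplit: "proper_weak_regular_multisplitting A p U V E"
    and rangeE: "\<forall>k\<in>{1..p}. mat_range (E k) \<subseteq> mat_range (transpose A)"
  defines "H \<equiv> (\<Sum>k=1..p. E k ** moore_penrose (U k) ** V k)"
  defines "B \<equiv> A ** matrix_inv (mat 1 - H)"
  defines "C \<equiv> B - A"
  shows "invertible (mat 1 - H) \<and>
    proper_splitting A B C \<and> moore_penrose B ** C = H \<and>
    (\<forall>B' C'. proper_splitting A B' C' \<and> moore_penrose B' ** C' = H \<longrightarrow> B' = B \<and> C' = C) \<and>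
    convergent_splitting B C \<and> proper_weak_regular_splitting A B C"
proof -
  let ?K = "{1..p}"
  let ?Ap = "moore_penrose A"
  let ?Q = "A ** ?Ap"
  let ?one = "(\<chi> i. 1) :: real^'m"
  have pws: "\<And>k. k \<in> ?K \<Longrightarrow> proper_weak_regular_splitting A (U k) (V k)"
    and Enn: "\<And>k. k \<in> ?K \<Longrightarrow> nonneg_mat (E k)"
    and Ed: "\<And>k. k \<in> ?K \<Longrightarrow> diagonal_mat (E k)"
    and sumE: "(\<Sum>k\<in>?K. E k) = mat 1"
    using msplit by (auto simp: proper_weak_regular_multisplitting_def)
  have injA: "x = 0" if Ax: "A *v x = 0" for x
  proof -
    have "\<forall>k\<in>?K. \<exists>y. E k *v x = transpose A *v y"
    proof
      fix k assume k: "k \<in> ?K"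
      have "E k *v x \<in> mat_range (E k)" by (simp add: mat_range_def)
      then have "E k *v x \<in> mat_range (transpose A)" using rangeE k by blast
      then show "\<exists>y. E k *v x = transpose A *v y" unfolding mat_range_def by blast
    qed
    then obtain y where y: "\<And>k. k \<in> ?K \<Longrightarrow> E k *v x = transpose A *v y k" by metis
    have "x = (\<Sum>k\<in>?K. E k) *v x" using sumE by simp
    also have "\<dots> = (\<Sum>k\<in>?K. E k *v x)" by (rule sum_mvec)
    finally have "x \<bullet> x = (\<Sum>k\<in>?K. (E k *v x) \<bullet> x)" by (metis inner_sum_left)
    also have "\<dots> = (\<Sum>k\<in>?K. (transpose A *v y k) \<bullet> x)" using y by simp
    also have "\<dots> = (\<Sum>k\<in>?K. y k \<bullet> (A *v x))"
      by (simp add: transpose_matrix_vector dot_lmul_matrix)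
    also have "\<dots> = 0" using Ax by simp
    finally show "x = 0" by simp
  qed
  have ApA: "?Ap ** A = mat 1" by (rule mp_props(1)[of A, OF injA])
  have injU: "\<And>x. U k *v x = 0 \<Longrightarrow> x = 0" if k: "k \<in> ?K" for k
  proof -
    fix x assume "U k *v x = 0"
    then have "x \<in> mat_null (U k)" by (simp add: mat_null_def)
    then have "x \<in> mat_null A" using pws[OF k] by (simp add: proper_weak_regular_splitting_def proper_splitting_def)
    then show "x = 0" using injA by (simp add: mat_null_def)
  qed
  have Vk: "V k = U k - A" if k: "k \<in> ?K" for k
    using pws[OF k] by (auto simp: proper_weak_regular_splitting_def proper_splitting_def)
  have UUp: "U k ** moore_penrose (U k) = ?Q" if k: "k \<in> ?K" for k
  proof (rule proj_eq)
    show "\<And>v. U k *v v = 0 \<Longrightarrow> v = 0" by (rule injU[OF k])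
    show "\<And>v. A *v v = 0 \<Longrightarrow> v = 0" by (rule injA)
    show "mat_range (U k) = mat_range A"
      using pws[OF k] unfolding proper_weak_regular_splitting_def proper_splitting_def by (elim conjE)
  qed
  have UpU: "moore_penrose (U k) ** U k = mat 1" if k: "k \<in> ?K" for k
    by (rule mp_props(1)[of "U k", OF injU[OF k]])
  have UpQ: "moore_penrose (U k) ** ?Q = moore_penrose (U k)" if k: "k \<in> ?K" for k
    using mp_props(4)[of "U k", OF injU[OF k]] UUp[OF k] by (metis matrix_mul_assoc)
  have Upnn: "nonneg_mat (moore_penrose (U k))" and UpVnn: "nonneg_mat (moore_penrose (U k) ** V k)"
    if k: "k \<in> ?K" for k
    using pws[OF k] by (simp_all add: proper_weak_regular_splitting_def)
  define G where "G = (\<Sum>k\<in>?K. E k ** moore_penrose (U k))"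
  have Hd: "H = (\<Sum>k\<in>?K. E k ** moore_penrose (U k) ** V k)" using assms(4) by simp
  have HG: "H = mat 1 - G ** A"
  proof -
    have "H = (\<Sum>k\<in>?K. E k - E k ** moore_penrose (U k) ** A)"
      unfolding Hd
    proof (rule sum.cong[OF refl])
      fix k assume k: "k \<in> ?K"
      have "E k ** moore_penrose (U k) ** V k = E k ** (moore_penrose (U k) ** U k - moore_penrose (U k) ** A)"
        by (simp add: Vk[OF k] mmul_diff_left matrix_mul_assoc)
      also have "\<dots> = E k - E k ** moore_penrose (U k) ** A"
        by (simp add: UpU[OF k] mmul_diff_left matrix_mul_assoc)
      finally show "E k ** moore_penrose (U k) ** V k = E k - E k ** moore_penrose (U k) ** A" .
    qed
    also have "\<dots> = (\<Sum>k\<in>?K. E k) - (\<Sum>k\<in>?K. E k ** moore_penrose (U k) ** A)"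
      by (rule sum_subtractf)
    also have "\<dots> = mat 1 - G ** A" using sumE by (simp add: G_def sum_mmul_right)
    finally show ?thesis .
  qed
  have GQ: "G ** ?Q = G"
    unfolding G_def sum_mmul_right
    by (rule sum.cong[OF refl]) (simp add: UpQ matrix_mul_assoc[symmetric])
  have Gnn: "nonneg_mat G" unfolding G_def
    by (rule nonneg_sum) (simp add: nonneg_mul Enn Upnn)
  have Hnn: "nonneg_mat H" unfolding Hd
    by (rule nonneg_sum) (simp add: nonneg_mul Enn UpVnn matrix_mul_assoc[symmetric])
  define w where "w = ?Ap *v ?one"
  have wpos: "0 < w$i" for i unfolding w_def by (rule rows_pos[OF semimono ApA])
  have Hw: "H *v w = w - G *v ?one"
  proof -
    have "H *v w = w - (G ** ?Q) *v ?one"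
      unfolding HG w_def matrix_vector_mult_diff_rdistrib
      by (simp add: matrix_vector_mul_assoc matrix_mul_assoc)
    then show ?thesis by (simp add: GQ)
  qed
  have G1pos: "0 < (G *v ?one)$i" for i
  proof -
    have "(G *v ?one)$i = (\<Sum>k\<in>?K. E k $i$i * (moore_penrose (U k) *v ?one)$i)"
      unfolding G_def sum_mvec sum_component
      by (rule sum.cong[OF refl]) (simp add: matrix_vector_mul_assoc[symmetric] diag_apply Ed)
    moreover have "\<exists>k\<in>?K. 0 < E k $i$i"
    proof (rule ccontr)
      assume "\<not> ?thesis"
      then have "\<forall>k\<in>?K. E k $i$i = 0" using Enn by (force simp: nonneg_mat_def order_less_le)
      then have "(\<Sum>k\<in>?K. E k $i$i) = 0" by simp
      moreover have "(\<Sum>k\<in>?K. E k $i$i) = 1"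
        using arg_cong[OF sumE, of "\<lambda>X. X$i$i"] by (simp add: sum_component mat_def)
      ultimately show False by simp
    qed
    then obtain k where k: "k \<in> ?K" "0 < E k $i$i" by blast
    have "0 < (\<Sum>k\<in>?K. E k $i$i * (moore_penrose (U k) *v ?one)$i)"
    proof (rule sum_pos2[of ?K k])
      show "0 < E k $i$i * (moore_penrose (U k) *v ?one)$i"
        using k rows_pos[OF Upnn UpU, of k i] by simp
      fix j assume j: "j \<in> ?K"
      have "0 \<le> E j $i$i" using Enn[OF j] by (simp add: nonneg_mat_def)
      moreover have "0 < (moore_penrose (U j) *v ?one)$i" using rows_pos[OF Upnn UpU, of j i] j by simp
      ultimately show "0 \<le> E j $i$i * (moore_penrose (U j) *v ?one)$i" by simp
    qed (use k in auto)
    ultimately show ?thesis by simp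
  qed
  have lt: "(H *v w)$i < w$i" for i using G1pos[of i] by (simp add: Hw)
  obtain c where c1: "c < 1" and cb: "\<And>z v. v \<noteq> 0 \<Longrightarrow> (\<chi> i j. complex_of_real (H$i$j)) *v v = z *s v \<Longrightarrow> cmod z \<le> c"
    using weighted_bound[OF Hnn wpos lt] by blast
  have invIH: "invertible (mat 1 - H)"
  proof -
    have "x = 0" if x: "(mat 1 - H) *v x = 0" for x
    proof (rule ccontr)
      assume x0: "x \<noteq> 0"
      from x have Hx: "H *v x = x" by (simp add: matrix_vector_mult_diff_rdistrib)
      let ?v = "(\<chi> i. complex_of_real (x$i))"
      have "?v \<noteq> 0" using x0 by (auto simp: vec_eq_iff)
      moreover have "(\<chi> i j. complex_of_real (H$i$j)) *v ?v = 1 *s ?v"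
        by (simp add: complex_embed Hx)
      ultimately have "cmod 1 \<le> c" by (rule cb)
      then show False using c1 by simp
    qed
    then show ?thesis using matrix_left_invertible_ker invertible_left_inverse by blast
  qed
  have srH: "spectral_radius H < 1"
  proof -
    let ?S = "{cmod z | z. \<exists>v :: complex^'n. v \<noteq> 0 \<and>
       (\<chi> i j. complex_of_real (H $ i $ j)) *v v = z *s v}"
    have "?S \<noteq> {}" using eig_exists[of "\<chi> i j. complex_of_real (H $ i $ j)"] by blast
    then have "Sup ?S \<le> c" by (rule cSup_least) (auto intro: cb)
    then show ?thesis unfolding spectral_radius_def using c1 by linarith
  qed
  define M where "M = matrix_inv (mat 1 - H)"
  have IHM: "(mat 1 - H) ** M = mat 1" and MIH: "M ** (mat 1 - H) = mat 1"
    using minv[OF invIH] by (simp_all add: M_def)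
  have Bd: "B = A ** M" using assms(5) by (simp add: M_def)
  have Cd: "C = B - A" using assms(6) by simp
  have AB: "B ** (mat 1 - H) = A" using MIH by (simp add: Bd matrix_mul_assoc[symmetric])
  have injB: "x = 0" if "B *v x = 0" for x
  proof -
    have "A *v (M *v x) = 0" using that by (simp add: Bd matrix_vector_mul_assoc)
    then have "M *v x = 0" by (rule injA)
    then have "(mat 1 - H) *v (M *v x) = 0" by simp
    then show "x = 0" using IHM by (simp add: matrix_vector_mul_assoc)
  qed
  have rgB: "mat_range B = mat_range A"
  proof -
    have "B *v x = A *v (M *v x)" for x by (simp add: Bd matrix_vector_mul_assoc)
    moreover have "A *v x = B *v ((mat 1 - H) *v x)" for x using AB by (simp add: matrix_vector_mul_assoc)
    ultimately show ?thesis unfolding mat_range_def by (auto simp: image_def)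
  qed
  have propB: "proper_splitting A B C"
    unfolding proper_splitting_def using rgB null_inj[of B, OF injB] null_inj[of A, OF injA] by (simp add: Cd)
  have BpB: "moore_penrose B ** B = mat 1" by (rule mp_props(1)[of B, OF injB])
  have BBp: "B ** moore_penrose B = ?Q" by (rule proj_eq[of B A, OF injB injA rgB])
  have BpA: "moore_penrose B ** A = mat 1 - H"
  proof -
    have "moore_penrose B ** A = moore_penrose B ** (B ** (mat 1 - H))" by (simp add: AB)
    also have "\<dots> = (moore_penrose B ** B) ** (mat 1 - H)" by (rule matrix_mul_assoc)
    finally show ?thesis by (simp add: BpB)
  qed
  have BpC: "moore_penrose B ** C = H"
    by (simp add: Cd mmul_diff_left BpB BpA)
  have BpG: "moore_penrose B = G"
  proof -
    have "moore_penrose B = moore_penrose B ** (B ** moore_penrose B)"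
      using mp_props(4)[of B, OF injB] by (simp add: matrix_mul_assoc)
    also have "\<dots> = (moore_penrose B ** A) ** ?Ap" by (simp add: BBp matrix_mul_assoc)
    also have "\<dots> = G ** ?Q" by (simp add: BpA HG matrix_mul_assoc)
    also have "\<dots> = G" by (rule GQ)
    finally show ?thesis .
  qed
  have uniq: "B' = B \<and> C' = C" if "proper_splitting A B' C'" "moore_penrose B' ** C' = H" for B' C'
  proof -
    have C': "C' = B' - A" and rg': "mat_range B' = mat_range A" and nl': "mat_null B' = mat_null A"
      using that(1) by (auto simp: proper_splitting_def)
    have injB': "x = 0" if "B' *v x = 0" for x
      using that nl' injA by (auto simp: mat_null_def set_eq_iff)
    have B'pB': "moore_penrose B' ** B' = mat 1" by (rule mp_props(1)[of B', OF injB'])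
    have BB'p: "B' ** moore_penrose B' = ?Q" by (rule proj_eq[of B' A, OF injB' injA rg'])
    have "H = mat 1 - moore_penrose B' ** A" using that(2) by (simp add: C' mmul_diff_left B'pB')
    then have "moore_penrose B' ** A = mat 1 - H" by simp
    then have "B' ** (mat 1 - H) = B' ** (moore_penrose B' ** A)" by simp
    also have "\<dots> = ?Q ** A" by (simp add: matrix_mul_assoc BB'p)
    also have "\<dots> = A" by (simp add: matrix_mul_assoc[symmetric] ApA)
    finally have "B' ** (mat 1 - H) = A" .
    then have "B' ** (mat 1 - H) ** M = A ** M" by simp
    then have "B' = A ** M" using IHM by (simp add: matrix_mul_assoc[symmetric])
    then show ?thesis using Bd Cd C' by simp
  qed
  have conv: "convergent_splitting B C" using srH BpC by (simp add: convergent_splitting_def)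
  have pwr: "proper_weak_regular_splitting A B C"
    unfolding proper_weak_regular_splitting_def using propB Gnn Hnn BpC BpG by simp
  show ?thesis
    using invIH propB BpC conv pwr uniq by blast
qed

end
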